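(* Let $\|\cdot\|$ be any norm on $\mathbb{R}^d$. Suppose $\mathcal{S}$ is a finite collection of subsets of $\mathbb{R}^d$, each with at least $2$ elements, and let $\mathcal{H}(\mathcal{S})=(\mathbb{R}^d,E(\mathcal{S}))$ where $E(\mathcal{S})=\{T\subseteq\mathbb{R}^d \mid T \text{ is congruent in } (\mathbb{R}^d,\|\cdot\|) \text{ to some } S\in\mathcal{S}\}$. Then $\chi(\mathcal{H}(\mathcal{S}))<\infty$.
   Context: Two sets $X,Y\subseteq\mathbb{R}^d$ are congruent in $(\mathbb{R}^d,\|\cdot\|)$ iff one is the image of the other under a composition, in either order, of a surjective linear isometry of $(\mathbb{R}^d,\|\cdot\|)$ and a translation. A hypergraph $(V,E)$ has edges that are subsets of $V$ of size at least $2$; a proper coloring makes no edge monochromatic; $\chi$ is the least number of colors in a proper coloring. *)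

theory Defs
  imports "HOL-Analysis.Analysis"
begin

definition is_norm :: "(real ^ 'd \<Rightarrow> real) \<Rightarrow> bool" where
  "is_norm N \<longleftrightarrow>
     (\<forall>x. N x = 0 \<longleftrightarrow> x = 0) \<and>
     (\<forall>a x. N (a *\<^sub>R x) = \<bar>a\<bar> * N x) \<and>
     (\<forall>x y. N (x + y) \<le> N x + N y)"

definition surj_lin_isometry :: "(real ^ 'd \<Rightarrow> real) \<Rightarrow> (real ^ 'd \<Rightarrow> real ^ 'd) \<Rightarrow> bool" where
  "surj_lin_isometry N L \<longleftrightarrow> linear L \<and> surj L \<and> (\<forall>x y. N (L x - L y) = N (x - y))"

definition congruent_in :: "(real ^ 'd \<Rightarrow> real) \<Rightarrow> (real ^ 'd) set \<Rightarrow> (real ^ 'd) set \<Rightarrow> bool" where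
  "congruent_in N X Y \<longleftrightarrow>
     (\<exists>L v. surj_lin_isometry N L \<and>
        (Y = (\<lambda>x. L x + v) ` X \<or> Y = (\<lambda>x. L (x + v)) ` X \<or>
         X = (\<lambda>x. L x + v) ` Y \<or> X = (\<lambda>x. L (x + v)) ` Y))"

definition cong_edges :: "(real ^ 'd \<Rightarrow> real) \<Rightarrow> (real ^ 'd) set set \<Rightarrow> (real ^ 'd) set set" where
  "cong_edges N \<S> = {T. \<exists>S\<in>\<S>. congruent_in N T S}"

definition proper_coloring :: "'a set \<Rightarrow> 'a set set \<Rightarrow> nat \<Rightarrow> ('a \<Rightarrow> nat) \<Rightarrow> bool" where
  "proper_coloring V E k c \<longleftrightarrow>
     (\<forall>x\<in>V. c x < k) \<and> (\<forall>T\<in>E. \<not> (\<exists>i. \<forall>x\<in>T. c x = i))"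

definition finite_chromatic :: "'a set \<Rightarrow> 'a set set \<Rightarrow> bool" where
  "finite_chromatic V E \<longleftrightarrow> (\<exists>k c. proper_coloring V E k c)"

end

theory Submission
  imports Defs
begin

lemma nrm_zero: "is_norm N \<Longrightarrow> N 0 = 0"
  unfolding is_norm_def by blast

lemma nrm_neg: "is_norm N \<Longrightarrow> N (- x) = N x"
  unfolding is_norm_def by (metis abs_minus_cancel abs_one mult_1 scaleR_minus1_left)

lemma nrm_tri: "is_norm N \<Longrightarrow> N (x + y) \<le> N x + N y"
  unfolding is_norm_def by blast

lemma nrm_nonneg: "is_norm N \<Longrightarrow> N x \<ge> 0"
  using nrm_tri[of N x "-x"] nrm_neg[of N x] nrm_zero[of N] by simp

lemma nrm_scale: "is_norm N \<Longrightarrow> N (a *\<^sub>R x) = \<bar>a\<bar> * N x"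
  unfolding is_norm_def by blast

lemma nrm_sum: assumes "is_norm N" "finite A" shows "N (sum f A) \<le> (\<Sum>i\<in>A. N (f i))"
  using assms(2)
proof (induction A rule: finite_induct)
  case empty then show ?case using nrm_zero[OF assms(1)] by simp
next
  case (insert a A)
  then show ?case using nrm_tri[OF assms(1), of "f a" "sum f A"] by simp
qed

lemma nrm_upper:
  fixes N :: "real ^ 'd \<Rightarrow> real"
  assumes "is_norm N"
  shows "\<exists>K>0. \<forall>x. N x \<le> K * norm x"
proof -
  define K where "K = 1 + (\<Sum>b\<in>Basis. N (b::real^'d))"
  have K0: "K > 0" unfolding K_def using nrm_nonneg[OF assms] by (simp add: add_pos_nonneg sum_nonneg)
  have "N x \<le> K * norm x" for x
  proof -
    have "N x = N (\<Sum>b\<in>Basis. (x \<bullet> b) *\<^sub>R b)" by (simp add: euclidean_representation)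
    also have "\<dots> \<le> (\<Sum>b\<in>Basis. N ((x \<bullet> b) *\<^sub>R b))" by (rule nrm_sum[OF assms]) simp
    also have "\<dots> = (\<Sum>b\<in>Basis. \<bar>x \<bullet> b\<bar> * N b)" using nrm_scale[OF assms] by simp
    also have "\<dots> \<le> (\<Sum>b\<in>Basis. norm x * N b)"
      by (intro sum_mono mult_right_mono) (auto simp: Basis_le_norm nrm_nonneg[OF assms])
    also have "\<dots> = norm x * (\<Sum>b\<in>Basis. N b)" by (simp add: sum_distrib_left)
    also have "\<dots> \<le> K * norm x" unfolding K_def by (simp add: algebra_simps)
    finally show ?thesis .
  qed
  then show ?thesis using K0 by blast
qed

lemma nrm_lower:
  fixes N :: "real ^ 'd \<Rightarrow> real"
  assumes "is_norm N"
  shows "\<exists>c>0. \<forall>x. c * norm x \<le> N x"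
proof -
  obtain K where K: "K > 0" "\<And>x. N x \<le> K * norm x" using nrm_upper[OF assms] by blast
  have lip: "\<bar>N x - N y\<bar> \<le> K * norm (x - y)" for x y
  proof -
    have "N x \<le> N y + N (x - y)" using nrm_tri[OF assms, of y "x - y"] by simp
    moreover have "N y \<le> N x + N (y - x)" using nrm_tri[OF assms, of x "y - x"] by simp
    moreover have "N (y - x) = N (x - y)" using nrm_neg[OF assms, of "x - y"] by simp
    ultimately show ?thesis using K(2)[of "x - y"] by linarith
  qed
  have cont: "continuous_on (sphere 0 1) N"
    unfolding continuous_on_iff
  proof (intro ballI allI impI)
    fix x e assume "(e::real) > 0"
    show "\<exists>d>0. \<forall>x'\<in>sphere 0 1. dist x' x < d \<longrightarrow> dist (N x') (N x) < e"
    proof (intro exI[of _ "e / K"] conjI ballI impI)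
      show "e / K > 0" using \<open>e > 0\<close> K by simp
      fix x' :: "real^'d" assume "dist x' x < e / K"
      then have "K * norm (x' - x) < e" using K by (simp add: dist_norm field_simps)
      then show "dist (N x') (N x) < e" using lip[of x' x] by (simp add: dist_real_def)
    qed
  qed
  obtain b :: "real^'d" where b: "b \<in> Basis" using nonempty_Basis by blast
  have ne: "sphere (0::real^'d) 1 \<noteq> {}" proof -
    have "b \<in> sphere 0 1" using b by (simp add: norm_Basis)
    then show ?thesis by blast
  qed
  obtain x0 where x0: "x0 \<in> sphere 0 1" "\<And>y. y \<in> sphere 0 1 \<Longrightarrow> N x0 \<le> N y"
    using continuous_attains_inf[OF compact_sphere ne cont] by blast
  have "x0 \<noteq> 0" using x0(1) by auto
  then have c0: "N x0 > 0" using assms nrm_nonneg[OF assms, of x0] unfolding is_norm_def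
    by (metis less_eq_real_def)
  have "N x0 * norm x \<le> N x" for x
  proof (cases "x = 0")
    case True then show ?thesis using nrm_zero[OF assms] by simp
  next
    case False
    have "(1 / norm x) *\<^sub>R x \<in> sphere 0 1" using False by simp
    then have "N x0 \<le> N ((1 / norm x) *\<^sub>R x)" by (rule x0(2))
    also have "\<dots> = N x / norm x" using nrm_scale[OF assms] by simp
    finally show ?thesis using False by (simp add: field_simps)
  qed
  then show ?thesis using c0 by blast
qed

lemma edge_pair:
  assumes "congruent_in N T S" "x \<in> S" "y \<in> S"
  shows "\<exists>a\<in>T. \<exists>b\<in>T. N (a - b) = N (x - y)"
proof -
  obtain L v where L: "\<forall>x y. N (L x - L y) = N (x - y)" and
    c: "T = (\<lambda>x. L x + v) ` S \<or> T = (\<lambda>x. L (x + v)) ` S \<or>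
         S = (\<lambda>x. L x + v) ` T \<or> S = (\<lambda>x. L (x + v)) ` T"
    using assms(1) unfolding congruent_in_def surj_lin_isometry_def by blast
  from c show ?thesis
  proof (elim disjE)
    assume "T = (\<lambda>x. L x + v) ` S"
    then show ?thesis using assms L by (intro bexI[of _ "L x + v"] bexI[of _ "L y + v"]) auto
  next
    assume "T = (\<lambda>x. L (x + v)) ` S"
    then show ?thesis using assms L[rule_format, of "x + v" "y + v"]
      by (intro bexI[of _ "L (x + v)"] bexI[of _ "L (y + v)"]) auto
  next
    assume h: "S = (\<lambda>x. L x + v) ` T"
    then obtain a b where "a \<in> T" "b \<in> T" "x = L a + v" "y = L b + v" using assms by blast
    then show ?thesis using L by (intro bexI[of _ a] bexI[of _ b]) auto
  next
    assume h: "S = (\<lambda>x. L (x + v)) ` T"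
    then obtain a b where "a \<in> T" "b \<in> T" "x = L (a + v)" "y = L (b + v)" using assms by blast
    then show ?thesis using L[rule_format, of "a + v" "b + v"] by (intro bexI[of _ a] bexI[of _ b]) auto
  qed
qed

lemma int_mod_far:
  fixes a b m :: int
  assumes "a mod m = b mod m" "a \<noteq> b" "m > 0"
  shows "\<bar>a - b\<bar> \<ge> m"
proof -
  have "m dvd a - b" using assms(1) by (simp add: mod_eq_dvd_iff)
  then show ?thesis using dvd_imp_le_int[of "a - b" m] assms by simp
qed

lemma floor_far:
  fixes u w s :: real and m :: int
  assumes "\<bar>\<lfloor>u / s\<rfloor> - \<lfloor>w / s\<rfloor>\<bar> \<ge> m" "s > 0"
  shows "\<bar>u - w\<bar> > (m - 1) * s"
proof -
  have "\<bar>u / s - w / s\<bar> > m - 1"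
    using assms(1) floor_correct[of "u/s"] floor_correct[of "w/s"]
    by (smt (verit, ccfv_SIG) floor_less_iff le_floor_iff of_int_add of_int_diff of_int_le_iff)
  then have "\<bar>u - w\<bar> / s > m - 1" using assms(2) by (simp add: diff_divide_distrib[symmetric])
  then show ?thesis using assms(2) by (simp add: field_simps)
qed

lemma floor_near:
  fixes u w s :: real
  assumes "\<lfloor>u / s\<rfloor> = \<lfloor>w / s\<rfloor>" "s > 0"
  shows "\<bar>u - w\<bar> \<le> s"
proof -
  have "\<bar>u / s - w / s\<bar> < 1"
    using assms(1) floor_correct[of "u/s"] floor_correct[of "w/s"] by linarith
  then have "\<bar>u - w\<bar> / s < 1" using assms(2) by (simp add: diff_divide_distrib[symmetric])
  then show ?thesis using assms(2) by (simp add: field_simps)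
qed

theorem lemma4p2:
  fixes N :: "real ^ 'd \<Rightarrow> real" and \<S> :: "(real ^ 'd) set set"
  assumes "is_norm N"
    and "finite \<S>"
    and "\<forall>S\<in>\<S>. \<exists>x\<in>S. \<exists>y\<in>S. x \<noteq> y"
  shows "finite_chromatic UNIV (cong_edges N \<S>)"
proof -
  obtain px py where pxy: "\<And>S. S \<in> \<S> \<Longrightarrow> px S \<in> S \<and> py S \<in> S \<and> px S \<noteq> py S"
    using assms(3) by metis
  define R where "R = (\<lambda>S. N (px S - py S)) ` \<S>"
  have finR: "finite (insert 1 R)" using assms(2) unfolding R_def by simp
  define \<delta> where "\<delta> = Min (insert 1 R)"
  define M where "M = Max (insert 1 R)"
  have Rpos: "r > 0" if "r \<in> R" for r
    using that pxy assms(1) nrm_nonneg[OF assms(1)] unfolding R_def is_norm_def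
    by (smt (verit, best) eq_iff_diff_eq_0 imageE)
  have d0: "\<delta> > 0" unfolding \<delta>_def using finR Rpos by (subst Min_gr_iff) auto
  have M0: "M \<ge> 1" unfolding M_def using finR by simp
  have inR: "\<delta> \<le> r \<and> r \<le> M" if "r \<in> R" for r
    unfolding \<delta>_def M_def using finR that by simp
  obtain K where K: "K > 0" "\<And>x. N x \<le> K * norm x" using nrm_upper[OF assms(1)] by blast
  obtain c where c: "c > 0" "\<And>x. c * norm x \<le> N x" using nrm_lower[OF assms(1)] by blast
  define s where "s = \<delta> / (2 * K * real CARD('d))"
  have s0: "s > 0" unfolding s_def using d0 K by simp
  define m :: int where "m = \<lceil>M / (c * s)\<rceil> + 1"
  have m0: "m > 0" unfolding m_def using M0 c s0
    by (smt (verit) divide_pos_pos mult_pos_pos zero_less_ceiling)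
  have mM: "(m - 1) * s * c \<ge> M"
  proof -
    have h: "M / (c * s) \<le> \<lceil>M / (c * s)\<rceil>" by (rule le_of_int_ceiling)
    have "M \<le> \<lceil>M / (c * s)\<rceil> * (c * s)"
      using pos_divide_le_eq[OF mult_pos_pos[OF c(1) s0]] h by blast
    then show ?thesis unfolding m_def by (simp add: mult.commute mult.left_commute)
  qed
  define f where "f x = (\<lambda>i. \<lfloor>(x::real^'d) $ i / s\<rfloor> mod m)" for x
  have key: "N (x - y) < \<delta> \<or> N (x - y) > M" if "f x = f y" for x y
  proof (cases "\<forall>i. \<lfloor>x $ i / s\<rfloor> = \<lfloor>y $ i / s\<rfloor>")
    case True
    have "norm (x - y) \<le> (\<Sum>i\<in>UNIV. \<bar>(x - y) $ i\<bar>)" by (rule norm_le_l1_cart)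
    also have "\<dots> \<le> (\<Sum>i\<in>(UNIV::'d set). s)"
      using True floor_near s0 by (intro sum_mono) simp
    also have "\<dots> = real CARD('d) * s" by simp
    finally have "N (x - y) \<le> K * (real CARD('d) * s)"
      using K by (meson order_trans mult_left_mono less_imp_le)
    also have "\<dots> = \<delta> / 2" unfolding s_def using K by simp
    finally show ?thesis using d0 by simp
  next
    case False
    then obtain i where i: "\<lfloor>x $ i / s\<rfloor> \<noteq> \<lfloor>y $ i / s\<rfloor>" by blast
    have "\<lfloor>x $ i / s\<rfloor> mod m = \<lfloor>y $ i / s\<rfloor> mod m" using that unfolding f_def by metis
    then have "\<bar>\<lfloor>x $ i / s\<rfloor> - \<lfloor>y $ i / s\<rfloor>\<bar> \<ge> m" using int_mod_far i m0 by blast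
    then have "\<bar>x $ i - y $ i\<bar> > (m - 1) * s" using floor_far s0 by blast
    also have "\<bar>x $ i - y $ i\<bar> \<le> norm (x - y)" using component_le_norm_cart[of "x - y" i] by simp
    finally have "c * norm (x - y) > c * ((m - 1) * s)" using c by simp
    then have "N (x - y) > c * ((m - 1) * s)" using c(2)[of "x - y"] by linarith
    then show ?thesis using mM by (simp add: mult.commute mult.left_commute)
  qed
  define A where "A = range f"
  have "A \<subseteq> Pi UNIV (\<lambda>_. {0..<m})" unfolding A_def f_def using m0 by auto
  moreover have "finite (Pi UNIV (\<lambda>_::'d. {0..<m}))"
    using finite_PiE[of UNIV "\<lambda>_::'d. {0..<m}"] by (simp add: PiE_UNIV_domain)
  ultimately have finA: "finite A" by (rule finite_subset)
  obtain g where g: "bij_betw g A {0..<card A}" using ex_bij_betw_finite_nat[OF finA] by blast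
  define col where "col x = g (f x)" for x
  have "proper_coloring UNIV (cong_edges N \<S>) (card A) col"
    unfolding proper_coloring_def
  proof (intro conjI ballI notI)
    fix x :: "real^'d"
    show "col x < card A" using g unfolding col_def A_def bij_betw_def by auto
  next
    fix T assume T: "T \<in> cong_edges N \<S>" and mono: "\<exists>i. \<forall>x\<in>T. col x = i"
    then obtain S where S: "S \<in> \<S>" "congruent_in N T S" unfolding cong_edges_def by blast
    obtain a b where ab: "a \<in> T" "b \<in> T" "N (a - b) = N (px S - py S)"
      using edge_pair[OF S(2)] pxy[OF S(1)] by blast
    have "col a = col b" using mono ab by auto
    then have "f a = f b" using g unfolding col_def A_def bij_betw_def inj_on_def by auto
    then have "N (a - b) < \<delta> \<or> N (a - b) > M" by (rule key)
    moreover have "N (a - b) \<in> R" using ab S unfolding R_def by auto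
    ultimately show False using inR by fastforce
  qed
  then show ?thesis unfolding finite_chromatic_def by blast
qed

end
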